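(* Let $p,q$ be distinct propositional letters, define $p^0:=q\looparrowright p$, $p^{n+1}:=p\to p^n$, and for $T\subseteq\omega\setminus\{0\}$ let $\Lambda_T:=\{q\looparrowright p^m:m\in T\}$. If $P$ and $T$ are non-empty subsets of $\omega\setminus\{0\}$ with $P\neq T$, then $\mathcal{F}\Lambda_P\neq\mathcal{F}\Lambda_T$.
   Context: Language: propositional letters $\Phi=\{p_0,p_1,\dots\}$; connectives $\neg$, $\lor,\wedge,\to,\leftrightarrow,\vartriangle,\looparrowright$; $\mathsf{FOR}$ the set of all formulas. A substitution is an endomorphism of the free formula algebra. An Epstein model is $\langle v,\mathfrak{R}\rangle$ with $v:\Phi\to\{0,1\}$ and $\mathfrak{R}\subseteq\mathsf{FOR}^2$; truth: letters via $v$, boolean connectives classical, $\vartriangle$: both arguments true and pair in $\mathfrak{R}$; $\looparrowright$: material implication true and pair in $\mathfrak{R}$. $\mathcal{F}$ is the least set containing all classical tautologies of the language and the axioms $(p\looparrowright q)\to(p\to q)$, $(p\vartriangle q)\leftrightarrow((p\looparrowright q)\wedge(p\wedge q))$, closed under uniform substitution and modus ponens; for $\Lambda\subseteq\mathsf{FOR}$, $\mathcal{F}\Lambda$ is the least set containing $\mathcal{F}\cup\Lambda$ closed under uniform substitution and modus ponens (equivalently, the formulas derivable by modus ponens from $\mathcal{F}$ and all substitution instances of members of $\Lambda$). $\mathcal{F}$ is sound and strongly complete for the class of all Epstein models. *)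

theory Defs
  imports Main
begin

datatype form =
    Var nat
  | Neg form
  | Or form form
  | And form form
  | Imp form form
  | Iff form form
  | Tri form form
  | Loop form form

primrec subst :: "(nat \<Rightarrow> form) \<Rightarrow> form \<Rightarrow> form" where
  "subst \<sigma> (Var n) = \<sigma> n"
| "subst \<sigma> (Neg A) = Neg (subst \<sigma> A)"
| "subst \<sigma> (Or A B) = Or (subst \<sigma> A) (subst \<sigma> B)"
| "subst \<sigma> (And A B) = And (subst \<sigma> A) (subst \<sigma> B)"
| "subst \<sigma> (Imp A B) = Imp (subst \<sigma> A) (subst \<sigma> B)"
| "subst \<sigma> (Iff A B) = Iff (subst \<sigma> A) (subst \<sigma> B)"
| "subst \<sigma> (Tri A B) = Tri (subst \<sigma> A) (subst \<sigma> B)"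
| "subst \<sigma> (Loop A B) = Loop (subst \<sigma> A) (subst \<sigma> B)"

text \<open>Classical evaluation: letters and formulas with main connective Tri or Loop
are treated as classical atoms (their truth value is given by w); the boolean
connectives are classical.\<close>

primrec ceval :: "(form \<Rightarrow> bool) \<Rightarrow> form \<Rightarrow> bool" where
  "ceval w (Var n) = w (Var n)"
| "ceval w (Neg A) = (\<not> ceval w A)"
| "ceval w (Or A B) = (ceval w A \<or> ceval w B)"
| "ceval w (And A B) = (ceval w A \<and> ceval w B)"
| "ceval w (Imp A B) = (ceval w A \<longrightarrow> ceval w B)"
| "ceval w (Iff A B) = (ceval w A \<longleftrightarrow> ceval w B)"
| "ceval w (Tri A B) = w (Tri A B)"
| "ceval w (Loop A B) = w (Loop A B)"

definition classical_taut :: "form \<Rightarrow> bool" where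
  "classical_taut A \<longleftrightarrow> (\<forall>w. ceval w A)"

inductive_set FL :: "form set \<Rightarrow> form set" for \<Lambda> :: "form set" where
  taut: "classical_taut A \<Longrightarrow> A \<in> FL \<Lambda>"
| ax1: "Imp (Loop (Var 0) (Var 1)) (Imp (Var 0) (Var 1)) \<in> FL \<Lambda>"
| ax2: "Iff (Tri (Var 0) (Var 1)) (And (Loop (Var 0) (Var 1)) (And (Var 0) (Var 1))) \<in> FL \<Lambda>"
| hyp: "A \<in> \<Lambda> \<Longrightarrow> A \<in> FL \<Lambda>"
| sub: "A \<in> FL \<Lambda> \<Longrightarrow> subst \<sigma> A \<in> FL \<Lambda>"
| mp: "A \<in> FL \<Lambda> \<Longrightarrow> Imp A B \<in> FL \<Lambda> \<Longrightarrow> B \<in> FL \<Lambda>"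

primrec ppow :: "nat \<Rightarrow> nat \<Rightarrow> nat \<Rightarrow> form" where
  "ppow p q 0 = Loop (Var q) (Var p)"
| "ppow p q (Suc n) = Imp (Var p) (ppow p q n)"

definition LambdaT :: "nat \<Rightarrow> nat \<Rightarrow> nat set \<Rightarrow> form set" where
  "LambdaT p q T = {Loop (Var q) (ppow p q m) | m. m \<in> T}"

end

theory Submission
  imports Defs
begin

primrec pw :: "form \<Rightarrow> form \<Rightarrow> nat \<Rightarrow> form" where
  "pw A C 0 = Loop A C"
| "pw A C (Suc n) = Imp C (pw A C n)"

lemma ppow_pw: "ppow p q m = pw (Var q) (Var p) m"
  by (induction m) auto

lemma subst_pw: "subst \<sigma> (pw A C n) = pw (subst \<sigma> A) (subst \<sigma> C) n"
  by (induction n) auto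

lemma pw_inj: "pw A C n = pw A' C' k \<Longrightarrow> n = k \<and> C = C'"
proof (induction n arbitrary: k)
  case 0 then show ?case by (cases k) auto
next
  case (Suc n) then show ?case by (cases k) auto
qed

fun ev :: "(nat \<Rightarrow> bool) \<Rightarrow> (form \<times> form) set \<Rightarrow> form \<Rightarrow> bool" where
  "ev v S (Var n) = v n"
| "ev v S (Neg A) = (\<not> ev v S A)"
| "ev v S (Or A B) = (ev v S A \<or> ev v S B)"
| "ev v S (And A B) = (ev v S A \<and> ev v S B)"
| "ev v S (Imp A B) = (ev v S A \<longrightarrow> ev v S B)"
| "ev v S (Iff A B) = (ev v S A \<longleftrightarrow> ev v S B)"
| "ev v S (Tri A B) = (ev v S A \<and> ev v S B)"
| "ev v S (Loop A B) = ((ev v S A \<longrightarrow> ev v S B) \<and> (ev v S A \<and> ev v S B \<or> (A, B) \<in> S))"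

lemma ceval_ev: "ceval (ev v S) A = ev v S A"
  by (induction A) auto

lemma ev_subst: "ev v S (subst \<sigma> A) = ev (\<lambda>n. ev v S (\<sigma> n)) {(A,B). (subst \<sigma> A, subst \<sigma> B) \<in> S} A"
  by (induction A) auto

definition Good :: "nat set \<Rightarrow> (form \<times> form) set" where
  "Good T = {(A, pw A C n) | A C n. n \<in> T}"

lemma ev_pw_true: "ev v S A \<Longrightarrow> ev v S C \<Longrightarrow> ev v S (pw A C n)"
  by (induction n) auto

lemma sound:
  assumes "F \<in> FL (LambdaT p q T)" "0 \<notin> T"
  shows "\<forall>v S. Good T \<subseteq> S \<longrightarrow> ev v S F"
  using assms(1)
proof (induction rule: FL.induct)
  case (taut A)
  then show ?case using ceval_ev unfolding classical_taut_def by metis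
next
  case ax1 then show ?case by auto
next
  case ax2 then show ?case by auto
next
  case (hyp A)
  then obtain m where m: "m \<in> T" "A = Loop (Var q) (ppow p q m)"
    unfolding LambdaT_def by auto
  with assms(2) obtain k where k: "m = Suc k" by (cases m) auto
  show ?case
  proof (intro allI impI)
    fix v S assume G: "Good T \<subseteq> S"
    have inS: "(Var q, pw (Var q) (Var p) m) \<in> S" using G m unfolding Good_def by blast
    have "ev v S (Var q) \<longrightarrow> ev v S (pw (Var q) (Var p) m)"
      using k by (cases "ev v S (Var p)") (auto intro: ev_pw_true)
    then show "ev v S A" using m inS by (simp add: ppow_pw)
  qed
next
  case (sub A \<sigma>)
  show ?case
  proof (intro allI impI)
    fix v S assume G: "Good T \<subseteq> S"
    have "Good T \<subseteq> {(A,B). (subst \<sigma> A, subst \<sigma> B) \<in> S}"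
      using G unfolding Good_def by (fastforce simp: subst_pw)
    then show "ev v S (subst \<sigma> A)" using sub.IH by (simp add: ev_subst)
  qed
next
  case (mp A B) then show ?case by auto
qed

lemma in_FL: "m \<in> P \<Longrightarrow> Loop (Var q) (ppow p q m) \<in> FL (LambdaT p q P)"
  by (rule FL.hyp) (auto simp: LambdaT_def)

lemma not_in_FL:
  assumes "m \<notin> T" "0 \<notin> T"
  shows "Loop (Var q) (ppow p q m) \<notin> FL (LambdaT p q T)"
proof
  assume "Loop (Var q) (ppow p q m) \<in> FL (LambdaT p q T)"
  from sound[OF this assms(2)] have "ev (\<lambda>_. False) (Good T) (Loop (Var q) (ppow p q m))" by blast
  then have "(Var q, pw (Var q) (Var p) m) \<in> Good T" by (simp add: ppow_pw)
  then obtain C n where "n \<in> T" "pw (Var q) (Var p) m = pw (Var q) C n"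
    unfolding Good_def by auto
  then show False using pw_inj assms(1) by metis
qed

theorem mainTheorem9:
  fixes p q :: nat and P T :: "nat set"
  assumes "p \<noteq> q"
    and "P \<noteq> {}" and "T \<noteq> {}"
    and "0 \<notin> P" and "0 \<notin> T"
    and "P \<noteq> T"
  shows "FL (LambdaT p q P) \<noteq> FL (LambdaT p q T)"
proof -
  obtain m where "m \<in> P \<and> m \<notin> T \<or> m \<in> T \<and> m \<notin> P" using assms(6) by blast
  then show ?thesis using in_FL not_in_FL assms(4,5) by metis
qed

end
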